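(* Let $\Theta$ be a variety of universal algebras and let $H$ be a finitely generated free $\Theta$-algebra. If $H$ is weakly homogeneous, then $H$ is logically perfect.
   Context: $X^0=\{x_1,x_2,\dots\}$ is an infinite set of variables; for finite $X\subset X^0$, $W(X)$ is the free $\Theta$-algebra on $X$; homomorphisms $W(X)\to H$ are called points. For each finite $X$, the set $\Phi(X)$ of formulas of sort $X$ is defined inductively: equalities $w\equiv w'$ ($w,w'\in W(X)$) are in $\Phi(X)$; $\Phi(X)$ is closed under $\neg,\vee,\wedge$ and $\exists x$ for $x\in X$; and for every homomorphism $s:W(X)\to W(Y)$ and $u\in\Phi(X)$, $s_*u\in\Phi(Y)$. Values $Val^X_H(u)\subseteq\mathrm{Hom}(W(X),H)$: $Val^X_H(w\equiv w')=\{\mu:\mu(w)=\mu(w')\}$; $\mu\in Val^X_H(\exists x\,u)$ iff some point $\nu$ agreeing with $\mu$ on $X\setminus\{x\}$ lies in $Val^X_H(u)$; $\vee,\wedge,\neg$ are union, intersection, complement; $\mu\in Val^Y_H(s_*u)$ iff $\mu\circ s\in Val^X_H(u)$. The logical kernel of a point $\mu:W(X)\to H$ is $LKer(\mu)=\{u\in\Phi(X):\mu\in Val^X_H(u)\}$. An algebra $H$ is logically perfect if for every finite $X$ and every two points $\mu,\nu:W(X)\to H$ with $LKer(\mu)=LKer(\nu)$ there is an automorphism $\varphi$ of $H$ with $\mu=\varphi\circ\nu$. An algebra $H$ is weakly homogeneous if for every isomorphism $\varphi:A\to B$ between finitely generated subalgebras $A,B$ of $H$ such that both $\varphi$ and $\varphi^{-1}:B\to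 A$ extend to endomorphisms of $H$, the map $\varphi$ extends to an automorphism of $H$. *)

theory Defs
  imports Main
begin

text \<open>Variables are the naturals (X0 = {x_1, x_2, ...} is the type nat).
A variety Theta is given by a set E of defining identities (pairs of terms).\<close>

datatype 'f trm = V nat | F 'f "'f trm list"

fun wf_trm :: "('f \<Rightarrow> nat) \<Rightarrow> nat set \<Rightarrow> 'f trm \<Rightarrow> bool" where
  "wf_trm ar X (V n) = (n \<in> X)"
| "wf_trm ar X (F f ts) = (length ts = ar f \<and> (\<forall>t\<in>set ts. wf_trm ar X t))"

fun subst :: "(nat \<Rightarrow> 'f trm) \<Rightarrow> 'f trm \<Rightarrow> 'f trm" where
  "subst \<sigma> (V n) = \<sigma> n"
| "subst \<sigma> (F f ts) = F f (map (subst \<sigma>) ts)"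

text \<open>Equational consequence (Birkhoff's rules) of the identities E.\<close>
inductive deriv :: "('f \<Rightarrow> nat) \<Rightarrow> ('f trm \<times> 'f trm) set \<Rightarrow> 'f trm \<Rightarrow> 'f trm \<Rightarrow> bool"
  for ar E where
  ax: "(l, r) \<in> E \<Longrightarrow> (\<forall>n. wf_trm ar UNIV (\<sigma> n)) \<Longrightarrow> deriv ar E (subst \<sigma> l) (subst \<sigma> r)"
| refl: "wf_trm ar UNIV t \<Longrightarrow> deriv ar E t t"
| sym: "deriv ar E s t \<Longrightarrow> deriv ar E t s"
| trans: "deriv ar E s t \<Longrightarrow> deriv ar E t u \<Longrightarrow> deriv ar E s u"
| cong: "length ts = ar f \<Longrightarrow> list_all2 (deriv ar E) ts ts' \<Longrightarrow> deriv ar E (F f ts) (F f ts')"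

record ('f, 'a) alg =
  carrier :: "'a set"
  op :: "'f \<Rightarrow> 'a list \<Rightarrow> 'a"

text \<open>Homomorphisms are taken extensional (undefined outside the carrier).\<close>
definition hom :: "('f \<Rightarrow> nat) \<Rightarrow> ('f, 'a) alg \<Rightarrow> ('f, 'b) alg \<Rightarrow> ('a \<Rightarrow> 'b) set" where
  "hom ar A B = {h. (\<forall>x. x \<notin> carrier A \<longrightarrow> h x = undefined)
     \<and> (\<forall>x\<in>carrier A. h x \<in> carrier B)
     \<and> (\<forall>f cs. length cs = ar f \<and> set cs \<subseteq> carrier A \<longrightarrow>
            h (op A f cs) = op B f (map h cs))}"

definition iso :: "('f \<Rightarrow> nat) \<Rightarrow> ('f, 'a) alg \<Rightarrow> ('f, 'b) alg \<Rightarrow> ('a \<Rightarrow> 'b) set" where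
  "iso ar A B = {h. h \<in> hom ar A B \<and> bij_betw h (carrier A) (carrier B)}"

definition automorphism :: "('f \<Rightarrow> nat) \<Rightarrow> ('f, 'a) alg \<Rightarrow> ('a \<Rightarrow> 'a) \<Rightarrow> bool" where
  "automorphism ar H \<phi> \<longleftrightarrow> \<phi> \<in> iso ar H H"

text \<open>W(X): X-terms modulo equational consequence of E.\<close>
definition cls :: "('f \<Rightarrow> nat) \<Rightarrow> ('f trm \<times> 'f trm) set \<Rightarrow> nat set \<Rightarrow> 'f trm \<Rightarrow> 'f trm set" where
  "cls ar E X t = {t'. wf_trm ar X t' \<and> deriv ar E t t'}"

definition W :: "('f \<Rightarrow> nat) \<Rightarrow> ('f trm \<times> 'f trm) set \<Rightarrow> nat set \<Rightarrow> ('f, 'f trm set) alg" where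
  "W ar E X = \<lparr> carrier = {cls ar E X t | t. wf_trm ar X t},
     op = (\<lambda>f cs. if length cs = ar f \<and> set cs \<subseteq> {cls ar E X t | t. wf_trm ar X t}
                  then cls ar E X (F f (map (\<lambda>c. SOME t. t \<in> c) cs)) else undefined) \<rparr>"

datatype 'f form =
    Eq "'f trm set" "'f trm set"
  | Neg "'f form"
  | Disj "'f form" "'f form"
  | Conj "'f form" "'f form"
  | Exi nat "'f form"
  | Sub "nat set" "'f trm set \<Rightarrow> 'f trm set" "'f form"  \<comment> \<open>Sub X s u = s_* u for s: W(X) \<rightarrow> W(Y)\<close>

inductive phi :: "('f \<Rightarrow> nat) \<Rightarrow> ('f trm \<times> 'f trm) set \<Rightarrow> nat set \<Rightarrow> 'f form \<Rightarrow> bool"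
  for ar E where
  eq: "finite X \<Longrightarrow> w \<in> carrier (W ar E X) \<Longrightarrow> w' \<in> carrier (W ar E X) \<Longrightarrow> phi ar E X (Eq w w')"
| neg: "phi ar E X u \<Longrightarrow> phi ar E X (Neg u)"
| disj: "phi ar E X u \<Longrightarrow> phi ar E X v \<Longrightarrow> phi ar E X (Disj u v)"
| conj: "phi ar E X u \<Longrightarrow> phi ar E X v \<Longrightarrow> phi ar E X (Conj u v)"
| exi: "phi ar E X u \<Longrightarrow> x \<in> X \<Longrightarrow> phi ar E X (Exi x u)"
| sub: "finite Y \<Longrightarrow> s \<in> hom ar (W ar E X) (W ar E Y) \<Longrightarrow> phi ar E X u \<Longrightarrow> phi ar E Y (Sub X s u)"

primrec val :: "('f \<Rightarrow> nat) \<Rightarrow> ('f trm \<times> 'f trm) set \<Rightarrow> ('f, 'a) alg \<Rightarrow> nat set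
    \<Rightarrow> 'f form \<Rightarrow> ('f trm set \<Rightarrow> 'a) set" where
  "val ar E H X (Eq w w') = {\<mu> \<in> hom ar (W ar E X) H. \<mu> w = \<mu> w'}"
| "val ar E H X (Neg u) = hom ar (W ar E X) H - val ar E H X u"
| "val ar E H X (Disj u v) = val ar E H X u \<union> val ar E H X v"
| "val ar E H X (Conj u v) = val ar E H X u \<inter> val ar E H X v"
| "val ar E H X (Exi x u) = {\<mu> \<in> hom ar (W ar E X) H. \<exists>\<nu> \<in> hom ar (W ar E X) H.
      (\<forall>y \<in> X - {x}. \<nu> (cls ar E X (V y)) = \<mu> (cls ar E X (V y))) \<and> \<nu> \<in> val ar E H X u}"
| "val ar E H Y (Sub X s u) = {\<mu> \<in> hom ar (W ar E Y) H.
      (\<lambda>w. if w \<in> carrier (W ar E X) then \<mu> (s w) else undefined) \<in> val ar E H X u}"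

definition LKer :: "('f \<Rightarrow> nat) \<Rightarrow> ('f trm \<times> 'f trm) set \<Rightarrow> ('f, 'a) alg \<Rightarrow> nat set
    \<Rightarrow> ('f trm set \<Rightarrow> 'a) \<Rightarrow> 'f form set" where
  "LKer ar E H X \<mu> = {u. phi ar E X u \<and> \<mu> \<in> val ar E H X u}"

definition logically_perfect :: "('f \<Rightarrow> nat) \<Rightarrow> ('f trm \<times> 'f trm) set \<Rightarrow> ('f, 'a) alg \<Rightarrow> bool" where
  "logically_perfect ar E H \<longleftrightarrow>
    (\<forall>X. finite X \<longrightarrow> (\<forall>\<mu> \<in> hom ar (W ar E X) H. \<forall>\<nu> \<in> hom ar (W ar E X) H.
       LKer ar E H X \<mu> = LKer ar E H X \<nu> \<longrightarrow>
       (\<exists>\<phi>. automorphism ar H \<phi> \<and> (\<forall>w \<in> carrier (W ar E X). \<mu> w = \<phi> (\<nu> w)))))"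

inductive_set generated :: "('f \<Rightarrow> nat) \<Rightarrow> ('f, 'a) alg \<Rightarrow> 'a set \<Rightarrow> 'a set"
  for ar H S where
  base: "a \<in> S \<Longrightarrow> a \<in> generated ar H S"
| opr: "length cs = ar f \<Longrightarrow> \<forall>c\<in>set cs. c \<in> generated ar H S \<Longrightarrow> op H f cs \<in> generated ar H S"

definition fg_subalg :: "('f \<Rightarrow> nat) \<Rightarrow> ('f, 'a) alg \<Rightarrow> 'a set \<Rightarrow> bool" where
  "fg_subalg ar H A \<longleftrightarrow> (\<exists>S. finite S \<and> S \<subseteq> carrier H \<and> A = generated ar H S)"

definition subalg :: "('f, 'a) alg \<Rightarrow> 'a set \<Rightarrow> ('f, 'a) alg" where
  "subalg H A = \<lparr> carrier = A, op = op H \<rparr>"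

definition weakly_homogeneous :: "('f \<Rightarrow> nat) \<Rightarrow> ('f, 'a) alg \<Rightarrow> bool" where
  "weakly_homogeneous ar H \<longleftrightarrow>
    (\<forall>A B \<phi>. fg_subalg ar H A \<and> fg_subalg ar H B \<and> \<phi> \<in> iso ar (subalg H A) (subalg H B)
       \<and> (\<exists>\<psi> \<in> hom ar H H. \<forall>a \<in> A. \<psi> a = \<phi> a)
       \<and> (\<exists>\<psi> \<in> hom ar H H. \<forall>b \<in> B. \<psi> b = inv_into A \<phi> b)
     \<longrightarrow> (\<exists>\<psi>. automorphism ar H \<psi> \<and> (\<forall>a \<in> A. \<psi> a = \<phi> a)))"

end

theory Submission
  imports Defs
begin


lemma wf_mono: "wf_trm ar X t \<Longrightarrow> X \<subseteq> Y \<Longrightarrow> wf_trm ar Y t"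
  by (induction t) auto

lemma wf_subst: "wf_trm ar X t \<Longrightarrow> (\<forall>n\<in>X. wf_trm ar Y (\<sigma> n)) \<Longrightarrow> wf_trm ar Y (subst \<sigma> t)"
  by (induction t) auto

lemma subst_cong: "wf_trm ar X t \<Longrightarrow> (\<forall>n\<in>X. \<sigma> n = \<sigma>' n) \<Longrightarrow> subst \<sigma> t = subst \<sigma>' t"
  by (induction t) auto

lemma subst_subst: "subst \<sigma> (subst \<tau> t) = subst (\<lambda>n. subst \<sigma> (\<tau> n)) t"
  by (induction t) auto

lemma deriv_wf:
  assumes wfE: "\<forall>(l, r) \<in> E. wf_trm ar UNIV l \<and> wf_trm ar UNIV r"
  shows "deriv ar E s t \<Longrightarrow> wf_trm ar UNIV s \<and> wf_trm ar UNIV t"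
proof (induction rule: deriv.induct)
  case (ax l r \<sigma>)
  then show ?case using wfE by (auto intro!: wf_subst)
next
  case (cong ts f ts')
  then show ?case
    by (auto simp: list_all2_conv_all_nth in_set_conv_nth) 
qed auto

lemma deriv_subst:
  assumes wfE: "\<forall>(l, r) \<in> E. wf_trm ar UNIV l \<and> wf_trm ar UNIV r"
  shows "deriv ar E s t \<Longrightarrow> (\<forall>n. wf_trm ar UNIV (\<sigma> n)) \<Longrightarrow> deriv ar E (subst \<sigma> s) (subst \<sigma> t)"
proof (induction rule: deriv.induct)
  case (ax l r \<tau>)
  have "deriv ar E (subst (\<lambda>n. subst \<sigma> (\<tau> n)) l) (subst (\<lambda>n. subst \<sigma> (\<tau> n)) r)"
    using ax by (intro deriv.ax) (auto intro: wf_subst)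
  then show ?case by (simp add: subst_subst)
next
  case (refl t)
  then show ?case by (auto intro!: deriv.refl wf_subst)
next
  case (sym s t) then show ?case by (auto intro: deriv.sym)
next
  case (trans s t u) then show ?case by (auto intro: deriv.trans)
next
  case (cong ts f ts')
  then show ?case
    by (auto intro!: deriv.cong simp: list_all2_conv_all_nth)
qed



lemma op_map_cong: "(\<And>x. x\<in>set xs \<Longrightarrow> f x = g x) \<Longrightarrow> op H k (map f xs) = op H k (map g xs)"
proof -
  assume a: "\<And>x. x\<in>set xs \<Longrightarrow> f x = g x"
  have "map f xs = map g xs" by (rule map_cong) (auto simp: a)
  then show ?thesis by (rule arg_cong)
qed

context
  fixes ar :: "'f \<Rightarrow> nat" and E :: "('f trm \<times> 'f trm) set"
  assumes wfE: "\<forall>(l, r) \<in> E. wf_trm ar UNIV l \<and> wf_trm ar UNIV r"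
begin

lemma cls_self: "wf_trm ar X t \<Longrightarrow> t \<in> cls ar E X t"
  unfolding cls_def by (auto intro: deriv.refl wf_mono)

lemma cls_eq: "wf_trm ar X s \<Longrightarrow> wf_trm ar X t \<Longrightarrow> cls ar E X s = cls ar E X t \<longleftrightarrow> deriv ar E s t"
proof
  assume "wf_trm ar X s" "wf_trm ar X t" "cls ar E X s = cls ar E X t"
  then show "deriv ar E s t" using cls_self[of X t] unfolding cls_def by auto
next
  assume "deriv ar E s t"
  then show "cls ar E X s = cls ar E X t"
    unfolding cls_def by (auto intro: deriv.trans deriv.sym)
qed

lemma carrier_W: "c \<in> carrier (W ar E X) \<longleftrightarrow> (\<exists>t. wf_trm ar X t \<and> c = cls ar E X t)"
  unfolding W_def by auto

lemma cls_in: "wf_trm ar X t \<Longrightarrow> cls ar E X t \<in> carrier (W ar E X)"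
  unfolding carrier_W by blast

lemma some_cls:
  assumes "wf_trm ar X t"
  shows "wf_trm ar X (SOME u. u \<in> cls ar E X t) \<and> cls ar E X (SOME u. u \<in> cls ar E X t) = cls ar E X t"
proof -
  have "(SOME u. u \<in> cls ar E X t) \<in> cls ar E X t" using cls_self[OF assms] by (rule someI)
  then show ?thesis unfolding cls_def
    using assms by (auto intro: deriv.trans deriv.sym)
qed

lemma some_carrier:
  assumes "c \<in> carrier (W ar E X)"
  shows "wf_trm ar X (SOME u. u \<in> c) \<and> cls ar E X (SOME u. u \<in> c) = c"
  using assms some_cls unfolding carrier_W by auto

lemma carrier_list:
  "set cs \<subseteq> carrier (W ar E X) \<Longrightarrow> \<exists>ts. (\<forall>t\<in>set ts. wf_trm ar X t) \<and> cs = map (cls ar E X) ts"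
proof (induction cs)
  case Nil then show ?case by auto
next
  case (Cons c cs)
  then obtain ts where "(\<forall>t\<in>set ts. wf_trm ar X t) \<and> cs = map (cls ar E X) ts" by auto
  moreover obtain t where "wf_trm ar X t" "c = cls ar E X t" using Cons.prems carrier_W by auto
  ultimately show ?case by (intro exI[of _ "t # ts"]) auto
qed

lemma op_W:
  assumes "length ts = ar f" "\<forall>t\<in>set ts. wf_trm ar X t"
  shows "op (W ar E X) f (map (cls ar E X) ts) = cls ar E X (F f ts)"
proof -
  let ?ts' = "map (\<lambda>c. SOME t. t \<in> c) (map (cls ar E X) ts)"
  have sub: "set (map (cls ar E X) ts) \<subseteq> carrier (W ar E X)"
    using assms cls_in by auto
  have wf': "\<forall>t\<in>set ?ts'. wf_trm ar X t" using assms some_cls by auto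
  have dd: "deriv ar E (SOME u. u \<in> cls ar E X t) t" if "t \<in> set ts" for t
  proof -
    have w: "wf_trm ar X t" using that assms by auto
    then show ?thesis using some_cls[OF w] cls_eq[of X "SOME u. u \<in> cls ar E X t" t] w by auto
  qed
  have "list_all2 (deriv ar E) ?ts' ts"
    unfolding list_all2_conv_all_nth using dd by auto
  then have "deriv ar E (F f ?ts') (F f ts)" using assms by (intro deriv.cong) auto
  then have "cls ar E X (F f ?ts') = cls ar E X (F f ts)"
    using cls_eq[of X "F f ?ts'" "F f ts"] assms wf' by auto
  then show ?thesis using sub assms unfolding W_def by simp
qed

lemma W_closed:
  assumes "length cs = ar f" "set cs \<subseteq> carrier (W ar E X)"
  shows "op (W ar E X) f cs \<in> carrier (W ar E X)"
proof -
  obtain ts where ts: "\<forall>t\<in>set ts. wf_trm ar X t" "cs = map (cls ar E X) ts"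
    using carrier_list assms by blast
  have "wf_trm ar X (F f ts)" using ts assms by auto
  then show ?thesis using assms ts op_W[of ts f X] cls_in by auto
qed

lemma hom_cls:
  assumes "\<mu> \<in> hom ar (W ar E X) H" "length ts = ar f" "\<forall>t\<in>set ts. wf_trm ar X t"
  shows "\<mu> (cls ar E X (F f ts)) = op H f (map (\<lambda>t. \<mu> (cls ar E X t)) ts)"
proof -
  have sub: "set (map (cls ar E X) ts) \<subseteq> carrier (W ar E X)"
    using assms cls_in by auto
  have "\<mu> (op (W ar E X) f (map (cls ar E X) ts)) = op H f (map \<mu> (map (cls ar E X) ts))"
    using assms(1) sub assms(2) unfolding hom_def by auto
  then show ?thesis using op_W[OF assms(2,3)] by (simp add: comp_def)
qed

lemma hom_agree:
  assumes "\<mu> \<in> hom ar (W ar E X) H" "\<mu>' \<in> hom ar (W ar E X) H"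
    "\<forall>x\<in>X. \<mu> (cls ar E X (V x)) = \<mu>' (cls ar E X (V x))"
  shows "wf_trm ar X t \<Longrightarrow> \<mu> (cls ar E X t) = \<mu>' (cls ar E X t)"
proof (induction t)
  case (V x) then show ?case using assms by auto
next
  case (F f ts)
  then have "map (\<lambda>t. \<mu> (cls ar E X t)) ts = map (\<lambda>t. \<mu>' (cls ar E X t)) ts" by auto
  then show ?case using F hom_cls[OF assms(1)] hom_cls[OF assms(2)] by (auto intro!: op_map_cong)
qed

lemma hom_agree':
  assumes "\<mu> \<in> hom ar (W ar E X) H" "\<mu>' \<in> hom ar (W ar E X) H"
    "\<forall>x\<in>X. \<mu> (cls ar E X (V x)) = \<mu>' (cls ar E X (V x))" "c \<in> carrier (W ar E X)"
  shows "\<mu> c = \<mu>' c"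
  using hom_agree[OF assms(1-3)] assms(4) carrier_W by auto

end

fun eval :: "('f, 'a) alg \<Rightarrow> (nat \<Rightarrow> 'a) \<Rightarrow> 'f trm \<Rightarrow> 'a" where
  "eval H \<rho> (V n) = \<rho> n"
| "eval H \<rho> (F f ts) = op H f (map (eval H \<rho>) ts)"

lemma eval_cong: "wf_trm ar X t \<Longrightarrow> (\<forall>n\<in>X. \<rho> n = \<rho>' n) \<Longrightarrow> eval H \<rho> t = eval H \<rho>' t"
  by (induction t) (auto intro!: op_map_cong)

lemma eval_subst: "eval H \<rho> (subst \<sigma> t) = eval H (\<lambda>n. eval H \<rho> (\<sigma> n)) t"
  by (induction t) (auto intro!: op_map_cong)

lemma hom_eval:
  assumes wfE: "\<forall>(l, r) \<in> E. wf_trm ar UNIV l \<and> wf_trm ar UNIV r"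
    and "\<mu> \<in> hom ar (W ar E X) H"
  shows "wf_trm ar X t \<Longrightarrow> \<mu> (cls ar E X t) = eval H (\<lambda>n. \<mu> (cls ar E X (V n))) t"
proof (induction t)
  case (V x) then show ?case by simp
next
  case (F f ts)
  then show ?case using hom_cls[OF wfE assms(2)] by (auto intro!: op_map_cong)
qed

definition hcomp :: "('f, 'a) alg \<Rightarrow> ('a \<Rightarrow> 'b) \<Rightarrow> ('b \<Rightarrow> 'c) \<Rightarrow> 'a \<Rightarrow> 'c" where
  "hcomp A g h = (\<lambda>x. if x \<in> carrier A then h (g x) else undefined)"

definition closed :: "('f \<Rightarrow> nat) \<Rightarrow> ('f, 'a) alg \<Rightarrow> bool" where
  "closed ar A \<longleftrightarrow> (\<forall>f cs. length cs = ar f \<and> set cs \<subseteq> carrier A \<longrightarrow> op A f cs \<in> carrier A)"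

lemma W_closed':
  assumes "\<forall>(l, r) \<in> E. wf_trm ar UNIV l \<and> wf_trm ar UNIV r"
  shows "closed ar (W ar E X)"
  using W_closed[OF assms] unfolding closed_def by auto

lemma hcomp_hom:
  assumes "g \<in> hom ar A B" "h \<in> hom ar B C" "closed ar A"
  shows "hcomp A g h \<in> hom ar A C"
proof -
  have "hcomp A g h (op A f cs) = op C f (map (hcomp A g h) cs)"
    if "length cs = ar f" "set cs \<subseteq> carrier A" for f cs
  proof -
    have m: "map (hcomp A g h) cs = map h (map g cs)"
      using that unfolding hcomp_def by auto
    have c: "op A f cs \<in> carrier A" using assms(3) that unfolding closed_def by auto
    have g1: "g (op A f cs) = op B f (map g cs)" using assms(1) that unfolding hom_def by auto
    have s: "set (map g cs) \<subseteq> carrier B" using assms(1) that unfolding hom_def by auto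
    have h1: "h (op B f (map g cs)) = op C f (map h (map g cs))"
      using assms(2) that s unfolding hom_def by auto
    have m2: "map (hcomp A g h) cs = map (h \<circ> g) cs" using that unfolding hcomp_def by auto
    have e: "hcomp A g h (op A f cs) = h (g (op A f cs))" using c unfolding hcomp_def by simp
    have "op C f (map (h \<circ> g) cs) = op C f (map (hcomp A g h) cs)"
      by (rule op_map_cong) (use that in \<open>auto simp: hcomp_def\<close>)
    then show ?thesis using g1 h1 e by simp
  qed
  moreover have "\<forall>x\<in>carrier A. hcomp A g h x \<in> carrier C"
    using assms unfolding hom_def hcomp_def by auto
  ultimately show ?thesis unfolding hom_def hcomp_def by auto
qed

definition hinv :: "('f, 'a) alg \<Rightarrow> ('f, 'b) alg \<Rightarrow> ('a \<Rightarrow> 'b) \<Rightarrow> 'b \<Rightarrow> 'a" where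
  "hinv A B h = (\<lambda>y. if y \<in> carrier B then inv_into (carrier A) h y else undefined)"

lemma hinv_props:
  assumes "h \<in> iso ar A B" "closed ar A"
  shows "hinv A B h \<in> hom ar B A"
    and "\<And>y. y \<in> carrier B \<Longrightarrow> h (hinv A B h y) = y"
    and "\<And>x. x \<in> carrier A \<Longrightarrow> hinv A B h (h x) = x"
    and "closed ar B"
proof -
  have hh: "h \<in> hom ar A B" and bij: "bij_betw h (carrier A) (carrier B)"
    using assms unfolding iso_def by auto
  show inv1: "\<And>y. y \<in> carrier B \<Longrightarrow> h (hinv A B h y) = y"
    using bij unfolding hinv_def by (simp add: bij_betw_inv_into_right)
  show inv2: "\<And>x. x \<in> carrier A \<Longrightarrow> hinv A B h (h x) = x"
    using bij unfolding hinv_def by (auto simp: bij_betw_inv_into_left bij_betwE)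
  have cl: "\<And>f cs. length cs = ar f \<Longrightarrow> set cs \<subseteq> carrier A \<Longrightarrow> op A f cs \<in> carrier A"
    using assms(2) unfolding closed_def by blast
  have inc: "\<And>y. y \<in> carrier B \<Longrightarrow> hinv A B h y \<in> carrier A"
    using bij unfolding hinv_def by (auto intro: inv_into_into simp: bij_betw_def)
  have opeq: "op B f cs = h (op A f (map (hinv A B h) cs))"
    if "length cs = ar f" "set cs \<subseteq> carrier B" for f cs
  proof -
    have "map h (map (hinv A B h) cs) = cs" using inv1 that(2) by (induction cs) auto
    moreover have hop: "\<And>f cs. length cs = ar f \<Longrightarrow> set cs \<subseteq> carrier A \<Longrightarrow> h (op A f cs) = op B f (map h cs)"
      using hh unfolding hom_def by blast
    moreover have "h (op A f (map (hinv A B h) cs)) = op B f (map h (map (hinv A B h) cs))"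
      by (rule hop) (use that inc in auto)
    ultimately show ?thesis by simp
  qed
  show "closed ar B" unfolding closed_def
  proof (intro allI impI)
    fix f cs assume a: "length cs = ar f \<and> set cs \<subseteq> carrier B"
    then have "op A f (map (hinv A B h) cs) \<in> carrier A"
      by (intro cl) (use inc in auto)
    then show "op B f cs \<in> carrier B" using opeq a hh unfolding hom_def by auto
  qed
  have "hinv A B h (op B f cs) = op A f (map (hinv A B h) cs)"
    if "length cs = ar f" "set cs \<subseteq> carrier B" for f cs
  proof -
    have "op A f (map (hinv A B h) cs) \<in> carrier A"
      by (intro cl) (use inc that in auto)
    then show ?thesis using opeq[OF that] inv2 by simp
  qed
  then show "hinv A B h \<in> hom ar B A" using inc unfolding hom_def hinv_def by auto
qed

definition shom :: "('f \<Rightarrow> nat) \<Rightarrow> ('f trm \<times> 'f trm) set \<Rightarrow> nat set \<Rightarrow> nat set \<Rightarrow> (nat \<Rightarrow> 'f trm)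
   \<Rightarrow> 'f trm set \<Rightarrow> 'f trm set" where
  "shom ar E X Y \<sigma> c = (if c \<in> carrier (W ar E X)
     then cls ar E Y (subst (\<lambda>n. if n \<in> X then \<sigma> n else V n) (SOME t. t \<in> c)) else undefined)"

context
  fixes ar :: "'f \<Rightarrow> nat" and E :: "('f trm \<times> 'f trm) set"
  assumes wfE: "\<forall>(l, r) \<in> E. wf_trm ar UNIV l \<and> wf_trm ar UNIV r"
begin

lemma shom_cls:
  assumes "wf_trm ar X t" "\<forall>x\<in>X. wf_trm ar Y (\<sigma> x)"
  shows "shom ar E X Y \<sigma> (cls ar E X t) = cls ar E Y (subst \<sigma> t)"
proof -
  let ?e = "\<lambda>n. if n \<in> X then \<sigma> n else V n"
  let ?t' = "SOME u. u \<in> cls ar E X t"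
  have c: "cls ar E X t \<in> carrier (W ar E X)" using assms carrier_W[OF wfE] by auto
  have t': "wf_trm ar X ?t'" "cls ar E X ?t' = cls ar E X t" using some_cls[OF wfE assms(1)] by auto
  then have d: "deriv ar E ?t' t" using cls_eq[OF wfE t'(1) assms(1)] by simp
  have ew: "\<forall>n. wf_trm ar UNIV (?e n)" using assms(2) by (auto intro: wf_mono)
  have d2: "deriv ar E (subst ?e ?t') (subst ?e t)" using deriv_subst[OF wfE d ew] .
  have s1: "subst ?e t = subst \<sigma> t" using subst_cong[OF assms(1)] by auto
  have w1: "wf_trm ar Y (subst ?e ?t')" using t'(1) assms(2) by (auto intro!: wf_subst)
  have w2: "wf_trm ar Y (subst \<sigma> t)" using assms by (auto intro!: wf_subst)
  show ?thesis using c d2 s1 cls_eq[OF wfE w1 w2] unfolding shom_def by simp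
qed

lemma shom_hom:
  assumes "\<forall>x\<in>X. wf_trm ar Y (\<sigma> x)"
  shows "shom ar E X Y \<sigma> \<in> hom ar (W ar E X) (W ar E Y)"
proof -
  have into: "\<forall>c\<in>carrier (W ar E X). shom ar E X Y \<sigma> c \<in> carrier (W ar E Y)"
  proof
    fix c assume "c \<in> carrier (W ar E X)"
    then obtain t where "wf_trm ar X t" "c = cls ar E X t" using carrier_W[OF wfE] by auto
    then show "shom ar E X Y \<sigma> c \<in> carrier (W ar E Y)"
      using shom_cls assms carrier_W[OF wfE] wf_subst by metis
  qed
  have "shom ar E X Y \<sigma> (op (W ar E X) f cs) = op (W ar E Y) f (map (shom ar E X Y \<sigma>) cs)"
    if l0: "length cs = ar f" and s0: "set cs \<subseteq> carrier (W ar E X)" for f cs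
  proof -
    obtain ts where ts: "\<forall>t\<in>set ts. wf_trm ar X t" "cs = map (cls ar E X) ts"
      using carrier_list[OF wfE s0] by blast
    have l: "length ts = ar f" using l0 ts by simp
    have "shom ar E X Y \<sigma> (op (W ar E X) f cs) = cls ar E Y (subst \<sigma> (F f ts))"
      using op_W[OF wfE l ts(1)] ts shom_cls[where t="F f ts"] assms l by auto
    also have "\<dots> = op (W ar E Y) f (map (cls ar E Y) (map (subst \<sigma>) ts))"
      using op_W[OF wfE, of "map (subst \<sigma>) ts" f Y] l ts assms by (auto intro: wf_subst)
    also have "map (cls ar E Y) (map (subst \<sigma>) ts) = map (shom ar E X Y \<sigma>) cs"
      using ts shom_cls assms by auto
    finally show ?thesis .
  qed
  then show ?thesis using into unfolding hom_def shom_def[abs_def] by auto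
qed

end



lemma val_hom: "\<kappa> \<in> val ar E H Z u \<Longrightarrow> \<kappa> \<in> hom ar (W ar E Z) H"
  by (induction u arbitrary: Z) auto

lemma val_conjs: "\<kappa> \<in> val ar E H Z (foldr Conj us b) \<longleftrightarrow> \<kappa> \<in> val ar E H Z b \<and> (\<forall>u\<in>set us. \<kappa> \<in> val ar E H Z u)"
  by (induction us) auto

lemma phi_conjs: "phi ar E Z b \<Longrightarrow> \<forall>u\<in>set us. phi ar E Z u \<Longrightarrow> phi ar E Z (foldr Conj us b)"
  by (induction us) (auto intro: phi.conj)

lemma phi_exis: "phi ar E Z u \<Longrightarrow> set ys \<subseteq> Z \<Longrightarrow> phi ar E Z (foldr Exi ys u)"
  by (induction ys) (auto intro: phi.exi)

lemma val_exis_D: "\<kappa> \<in> val ar E H Z (foldr Exi ys u) \<Longrightarrow>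
   \<exists>\<kappa>'. \<kappa>' \<in> val ar E H Z u \<and> (\<forall>z\<in>Z - set ys. \<kappa>' (cls ar E Z (V z)) = \<kappa> (cls ar E Z (V z)))"
proof (induction ys arbitrary: \<kappa>)
  case Nil then show ?case by auto
next
  case (Cons y ys)
  then obtain \<nu> where \<nu>: "\<forall>z\<in>Z - {y}. \<nu> (cls ar E Z (V z)) = \<kappa> (cls ar E Z (V z))"
     "\<nu> \<in> val ar E H Z (foldr Exi ys u)" by auto
  then obtain \<kappa>' where "\<kappa>' \<in> val ar E H Z u" "\<forall>z\<in>Z - set ys. \<kappa>' (cls ar E Z (V z)) = \<nu> (cls ar E Z (V z))"
    using Cons.IH by blast
  then show ?case using \<nu> by (intro exI[of _ \<kappa>']) auto
qed

locale setting =
  fixes ar :: "'f \<Rightarrow> nat" and E :: "('f trm \<times> 'f trm) set"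
    and H :: "('f, 'a) alg" and X0 :: "nat set" and \<theta> :: "'f trm set \<Rightarrow> 'a"
  assumes wfE: "\<forall>(l, r) \<in> E. wf_trm ar UNIV l \<and> wf_trm ar UNIV r"
    and finX0: "finite X0"
    and th: "\<theta> \<in> iso ar (W ar E X0) H"
begin

abbreviation "th' \<equiv> hinv (W ar E X0) H \<theta>"
abbreviation "gen X x \<equiv> cls ar E X (V x)"

lemma thhom: "\<theta> \<in> hom ar (W ar E X0) H" using th unfolding iso_def by auto
lemma th'hom: "th' \<in> hom ar H (W ar E X0)" using hinv_props(1)[OF th W_closed'[OF wfE]] .
lemma closedH: "closed ar H" using hinv_props(4)[OF th W_closed'[OF wfE]] .
lemma thth': "y \<in> carrier H \<Longrightarrow> \<theta> (th' y) = y" using hinv_props(2)[OF th W_closed'[OF wfE]] .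
lemma th'th: "x \<in> carrier (W ar E X0) \<Longrightarrow> th' (\<theta> x) = x" using hinv_props(3)[OF th W_closed'[OF wfE]] .

lemma hom_in: "\<mu> \<in> hom ar A B \<Longrightarrow> x \<in> carrier A \<Longrightarrow> \<mu> x \<in> carrier B"
  unfolding hom_def by auto

lemma gen_in: "x \<in> X \<Longrightarrow> gen X x \<in> carrier (W ar E X)"
  using cls_in[OF wfE] by auto

lemma hom_exists:
  assumes "\<forall>x\<in>X. \<rho> x \<in> carrier H"
  shows "\<exists>\<mu> \<in> hom ar (W ar E X) H. \<forall>x\<in>X. \<mu> (gen X x) = \<rho> x"
proof -
  define \<sigma> where "\<sigma> x = (SOME t. t \<in> th' (\<rho> x))" for x
  have c: "th' (\<rho> x) \<in> carrier (W ar E X0)" if "x \<in> X" for x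
    using hom_in[OF th'hom] assms that by auto
  have s: "wf_trm ar X0 (\<sigma> x) \<and> cls ar E X0 (\<sigma> x) = th' (\<rho> x)" if "x \<in> X" for x
    using some_carrier[OF wfE c[OF that]] unfolding \<sigma>_def by auto
  define \<mu> where "\<mu> = hcomp (W ar E X) (shom ar E X X0 \<sigma>) \<theta>"
  have "\<mu> \<in> hom ar (W ar E X) H" unfolding \<mu>_def
    by (rule hcomp_hom[OF shom_hom[OF wfE] thhom W_closed'[OF wfE]]) (use s in auto)
  moreover have "\<mu> (gen X x) = \<rho> x" if "x \<in> X" for x
  proof -
    have "\<mu> (gen X x) = \<theta> (shom ar E X X0 \<sigma> (gen X x))"
      unfolding \<mu>_def hcomp_def using gen_in[OF that] by simp
    also have "\<dots> = \<theta> (cls ar E X0 (\<sigma> x))"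
      using shom_cls[OF wfE, of X "V x" X0 \<sigma>] s that by auto
    also have "\<dots> = \<rho> x" using s[OF that] thth' assms that by auto
    finally show ?thesis .
  qed
  ultimately show ?thesis by blast
qed

lemma endo_exists:
  assumes "\<forall>n\<in>X0. g n \<in> carrier H"
  shows "\<exists>\<psi> \<in> hom ar H H. \<exists>\<psi>0 \<in> hom ar (W ar E X0) H.
     (\<forall>c\<in>carrier (W ar E X0). \<psi> (\<theta> c) = \<psi>0 c) \<and> (\<forall>n\<in>X0. \<psi>0 (gen X0 n) = g n)"
proof -
  obtain \<psi>0 where p0: "\<psi>0 \<in> hom ar (W ar E X0) H" "\<forall>n\<in>X0. \<psi>0 (gen X0 n) = g n"
    using hom_exists[OF assms] by blast
  define \<psi> where "\<psi> = hcomp H th' \<psi>0"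
  have "\<psi> \<in> hom ar H H" unfolding \<psi>_def by (rule hcomp_hom[OF th'hom p0(1) closedH])
  moreover have "\<psi> (\<theta> c) = \<psi>0 c" if "c \<in> carrier (W ar E X0)" for c
    unfolding \<psi>_def hcomp_def using that th'th hom_in[OF thhom that] by simp
  ultimately show ?thesis using p0 by blast
qed

lemma val_exis_I:
  "\<kappa> \<in> hom ar (W ar E Z) H \<Longrightarrow> \<kappa>' \<in> val ar E H Z u \<Longrightarrow>
   \<forall>z\<in>Z - set ys. \<kappa>' (gen Z z) = \<kappa> (gen Z z) \<Longrightarrow> set ys \<subseteq> Z \<Longrightarrow>
   \<kappa> \<in> val ar E H Z (foldr Exi ys u)"
proof (induction ys arbitrary: \<kappa>)
  case Nil
  have "\<kappa>' \<in> hom ar (W ar E Z) H" using val_hom Nil by blast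
  then have "\<forall>c\<in>carrier (W ar E Z). \<kappa>' c = \<kappa> c"
    using hom_agree'[OF wfE _ Nil(1)] Nil(3) by auto
  moreover have "\<forall>c. c \<notin> carrier (W ar E Z) \<longrightarrow> \<kappa>' c = \<kappa> c"
    using \<open>\<kappa>' \<in> hom ar (W ar E Z) H\<close> Nil(1) unfolding hom_def by auto
  ultimately have "\<kappa>' = \<kappa>" by (metis ext)
  then show ?case using Nil by simp
next
  case (Cons y ys)
  have k': "\<kappa>' \<in> hom ar (W ar E Z) H" using val_hom Cons by blast
  define \<rho> where "\<rho> z = (if z = y then \<kappa>' (gen Z z) else \<kappa> (gen Z z))" for z
  have "\<forall>z\<in>Z. \<rho> z \<in> carrier H" unfolding \<rho>_def
    using hom_in[OF k'] hom_in[OF Cons(2)] gen_in by auto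
  then obtain \<nu> where \<nu>: "\<nu> \<in> hom ar (W ar E Z) H" "\<forall>z\<in>Z. \<nu> (gen Z z) = \<rho> z"
    using hom_exists by blast
  have "\<nu> \<in> val ar E H Z (foldr Exi ys u)"
    by (rule Cons.IH[OF \<nu>(1) Cons(3)]) (use Cons(4,5) \<nu> in \<open>auto simp: \<rho>_def\<close>)
  moreover have "\<forall>z\<in>Z - {y}. \<nu> (gen Z z) = \<kappa> (gen Z z)" using \<nu> by (auto simp: \<rho>_def)
  ultimately show ?case using Cons(2) \<nu>(1) by auto
qed

end


context setting begin

lemma one_dir:
  assumes finX: "finite X" and mu: "\<mu> \<in> hom ar (W ar E X) H" and nu: "\<nu> \<in> hom ar (W ar E X) H"
    and LK: "LKer ar E H X \<nu> \<subseteq> LKer ar E H X \<mu>"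
  shows "\<exists>\<psi> \<in> hom ar H H. \<forall>c\<in>carrier (W ar E X). \<psi> (\<nu> c) = \<mu> c"
proof (cases "X = {}")
  case True
  define \<psi> where "\<psi> = (\<lambda>x. if x \<in> carrier H then x else (undefined :: 'a))"
  have mid: "map \<psi> cs = cs" if "set cs \<subseteq> carrier H" for cs
    using that by (induction cs) (auto simp: \<psi>_def)
  have "\<psi> (op H f cs) = op H f (map \<psi> cs)" if "length cs = ar f" "set cs \<subseteq> carrier H" for f cs
    using closedH that mid[OF that(2)] unfolding closed_def by (simp add: \<psi>_def)
  then have "\<psi> \<in> hom ar H H" unfolding hom_def by (auto simp: \<psi>_def)
  moreover have "\<psi> (\<nu> c) = \<mu> c" if "c \<in> carrier (W ar E X)" for c
    using hom_agree'[OF wfE nu mu _ that] True hom_in[OF nu that] unfolding \<psi>_def by auto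
  ultimately show ?thesis by blast
next
  case False
  then obtain x0 where x0: "x0 \<in> X" by auto
  define N where "N = Suc (Max X)"
  have xN: "x < N" if "x \<in> X" for x using Max_ge[OF finX that] unfolding N_def by simp
  define Y where "Y = (\<lambda>n. n + N) ` X0"
  define Z where "Z = X \<union> Y"
  have finZ: "finite Z" unfolding Z_def Y_def using finX finX0 by simp
  have XY: "X \<inter> Y = {}" unfolding Y_def using xN by fastforce
  have YZ: "n + N \<in> Z" "n + N \<notin> X" if "n \<in> X0" for n
    using that xN unfolding Z_def Y_def by force+
  define tx where "tx x = (SOME t. t \<in> th' (\<nu> (gen X x)))" for x
  have txp: "wf_trm ar X0 (tx x) \<and> cls ar E X0 (tx x) = th' (\<nu> (gen X x))" if "x \<in> X" for x
    using some_carrier[OF wfE hom_in[OF th'hom hom_in[OF nu gen_in[OF that]]]] unfolding tx_def by blast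
  define r :: "nat \<Rightarrow> 'f trm" where "r n = V (n + N)" for n
  have wfr: "wf_trm ar Z (subst r (tx x))" if "x \<in> X" for x
    using txp[OF that] YZ by (auto intro!: wf_subst simp: r_def)
  define eqf where "eqf x = Eq (gen Z x) (cls ar E Z (subst r (tx x)))" for x
  obtain xs where xs: "set xs = X" using finite_list[OF finX] by blast
  have finY: "finite Y" unfolding Y_def using finX0 by simp
  obtain ys where ys: "set ys = Y" using finite_list[OF finY] by blast
  define cf where "cf = foldr Conj (map eqf xs) (eqf x0)"
  define ef where "ef = foldr Exi ys cf"
  define \<sigma>s :: "nat \<Rightarrow> 'f trm" where "\<sigma>s z = (if z \<in> X then V z else V x0)" for z
  define s where "s = shom ar E Z X \<sigma>s"
  define v where "v = Sub Z s ef"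
  have shom: "s \<in> hom ar (W ar E Z) (W ar E X)" unfolding s_def
    by (rule shom_hom[OF wfE]) (use x0 in \<open>auto simp: \<sigma>s_def\<close>)
  have phieq: "phi ar E Z (eqf x)" if "x \<in> X" for x
    unfolding eqf_def using that finZ wfr[OF that] cls_in[OF wfE] unfolding Z_def
    by (auto intro!: phi.eq)
  have phiv: "phi ar E X v" unfolding v_def ef_def cf_def
    by (rule phi.sub[OF finX shom], rule phi_exis, rule phi_conjs)
       (use phieq x0 xs ys in \<open>auto simp: Z_def\<close>)
  have valeq: "\<kappa> \<in> val ar E H Z (eqf x) \<longleftrightarrow> \<kappa> \<in> hom ar (W ar E Z) H \<and>
      \<kappa> (gen Z x) = eval H (\<lambda>n. \<kappa> (gen Z (n + N))) (tx x)" if "x \<in> X" for x \<kappa>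
  proof -
    have "\<kappa> (cls ar E Z (subst r (tx x))) = eval H (\<lambda>n. \<kappa> (gen Z (n + N))) (tx x)"
      if "\<kappa> \<in> hom ar (W ar E Z) H"
      using hom_eval[OF wfE that wfr[OF \<open>x \<in> X\<close>]] unfolding r_def by (simp add: eval_subst)
    then show ?thesis unfolding eqf_def by auto
  qed
  have valcf: "\<kappa> \<in> val ar E H Z cf \<longleftrightarrow> \<kappa> \<in> hom ar (W ar E Z) H \<and> (\<forall>x\<in>X. \<kappa> (gen Z x) = eval H (\<lambda>n. \<kappa> (gen Z (n + N))) (tx x))" for \<kappa>
    unfolding cf_def val_conjs using valeq x0 xs by auto
  define cmp where "cmp \<kappa> = hcomp (W ar E Z) s \<kappa>" for \<kappa> :: "'f trm set \<Rightarrow> 'a"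
  have cmphom: "cmp \<kappa> \<in> hom ar (W ar E Z) H" if "\<kappa> \<in> hom ar (W ar E X) H" for \<kappa>
    unfolding cmp_def by (rule hcomp_hom[OF shom that W_closed'[OF wfE]])
  have cmpgen: "cmp \<kappa> (gen Z z) = \<kappa> (gen X z)" if "z \<in> X" for z \<kappa>
  proof -
    have "z \<in> Z" using that unfolding Z_def by auto
    then have "cmp \<kappa> (gen Z z) = \<kappa> (s (gen Z z))" unfolding cmp_def hcomp_def using gen_in by simp
    also have "s (gen Z z) = cls ar E X (subst \<sigma>s (V z))" unfolding s_def
      by (rule shom_cls[OF wfE]) (use \<open>z \<in> Z\<close> x0 in \<open>auto simp: \<sigma>s_def\<close>)
    finally show ?thesis using that by (simp add: \<sigma>s_def)
  qed
  have valv: "\<kappa> \<in> val ar E H X v \<longleftrightarrow> \<kappa> \<in> hom ar (W ar E X) H \<and> cmp \<kappa> \<in> val ar E H Z ef" for \<kappa>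
    unfolding v_def cmp_def hcomp_def by simp
  have ZmY: "Z - set ys = X" using XY ys unfolding Z_def by auto
  define \<rho> where "\<rho> z = (if z \<in> X then \<nu> (gen X z) else \<theta> (cls ar E X0 (V (z - N))))" for z
  have \<rho>c: "\<forall>z\<in>Z. \<rho> z \<in> carrier H"
  proof
    fix z assume "z \<in> Z"
    show "\<rho> z \<in> carrier H"
    proof (cases "z \<in> X")
      case True then show ?thesis unfolding \<rho>_def using hom_in[OF nu gen_in] by auto
    next
      case False
      then obtain n where "n \<in> X0" "z = n + N" using \<open>z \<in> Z\<close> unfolding Z_def Y_def by auto
      then show ?thesis unfolding \<rho>_def using False hom_in[OF thhom gen_in] by auto
    qed
  qed
  obtain \<kappa>' where \<kappa>': "\<kappa>' \<in> hom ar (W ar E Z) H" "\<forall>z\<in>Z. \<kappa>' (gen Z z) = \<rho> z"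
    using hom_exists[OF \<rho>c] by blast
  have "\<kappa>' \<in> val ar E H Z cf" unfolding valcf
  proof (intro conjI ballI \<kappa>'(1))
    fix x assume x: "x \<in> X"
    have "eval H (\<lambda>n. \<kappa>' (gen Z (n + N))) (tx x) = eval H (\<lambda>n. \<theta> (gen X0 n)) (tx x)"
      by (rule eval_cong[OF txp[OF x, THEN conjunct1]]) (use \<kappa>' YZ in \<open>auto simp: \<rho>_def\<close>)
    also have "\<dots> = \<theta> (cls ar E X0 (tx x))" using hom_eval[OF wfE thhom txp[OF x, THEN conjunct1]] by simp
    also have "\<dots> = \<nu> (gen X x)" using txp[OF x] thth' hom_in[OF nu gen_in[OF x]] by simp
    also have "\<dots> = \<kappa>' (gen Z x)" using \<kappa>' x unfolding \<rho>_def Z_def by auto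
    finally show "\<kappa>' (gen Z x) = eval H (\<lambda>n. \<kappa>' (gen Z (n + N))) (tx x)" by simp
  qed
  then have "cmp \<nu> \<in> val ar E H Z ef" unfolding ef_def
    by (rule val_exis_I[OF cmphom[OF nu]]) (use \<kappa>' cmpgen ys ZmY in \<open>auto simp: \<rho>_def Z_def\<close>)
  then have "v \<in> LKer ar E H X \<nu>" unfolding LKer_def using phiv valv nu by auto
  then have "\<mu> \<in> val ar E H X v" using LK unfolding LKer_def by auto
  then have "cmp \<mu> \<in> val ar E H Z ef" using valv by auto
  then obtain \<kappa> where \<kappa>: "\<kappa> \<in> val ar E H Z cf" "\<forall>z\<in>X. \<kappa> (gen Z z) = cmp \<mu> (gen Z z)"
    unfolding ef_def using val_exis_D ZmY by metis
  have \<kappa>h: "\<kappa> \<in> hom ar (W ar E Z) H" and \<kappa>e: "\<forall>x\<in>X. \<kappa> (gen Z x) = eval H (\<lambda>n. \<kappa> (gen Z (n + N))) (tx x)"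
    using \<kappa>(1) valcf by auto
  define g where "g n = \<kappa> (gen Z (n + N))" for n
  have gc: "\<forall>n\<in>X0. g n \<in> carrier H" unfolding g_def using hom_in[OF \<kappa>h gen_in] YZ by auto
  obtain \<psi> \<psi>0 where \<psi>: "\<psi> \<in> hom ar H H" "\<psi>0 \<in> hom ar (W ar E X0) H"
    "\<forall>c\<in>carrier (W ar E X0). \<psi> (\<theta> c) = \<psi>0 c" "\<forall>n\<in>X0. \<psi>0 (gen X0 n) = g n"
    using endo_exists[OF gc] by blast
  have gens: "hcomp (W ar E X) \<nu> \<psi> (gen X x) = \<mu> (gen X x)" if x: "x \<in> X" for x
  proof -
    have "hcomp (W ar E X) \<nu> \<psi> (gen X x) = \<psi> (\<nu> (gen X x))" unfolding hcomp_def using gen_in[OF x] by simp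
    also have "\<nu> (gen X x) = \<theta> (cls ar E X0 (tx x))" using txp[OF x] thth' hom_in[OF nu gen_in[OF x]] by simp
    also have "\<psi> \<dots> = \<psi>0 (cls ar E X0 (tx x))"
      using \<psi>(3) cls_in[OF wfE, of X0 "tx x"] txp[OF x] by blast
    also have "\<dots> = eval H g (tx x)" using hom_eval[OF wfE \<psi>(2) txp[OF x, THEN conjunct1]]
        eval_cong[OF txp[OF x, THEN conjunct1], of "\<lambda>n. \<psi>0 (gen X0 n)" g] \<psi>(4) by simp
    also have "\<dots> = \<kappa> (gen Z x)" using \<kappa>e x unfolding g_def by simp
    also have "\<dots> = \<mu> (gen X x)" using \<kappa>(2) cmpgen x by simp
    finally show ?thesis .
  qed
  have "\<psi> (\<nu> c) = \<mu> c" if "c \<in> carrier (W ar E X)" for c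
  proof -
    have "hcomp (W ar E X) \<nu> \<psi> c = \<mu> c"
      by (rule hom_agree'[OF wfE hcomp_hom[OF nu \<psi>(1) W_closed'[OF wfE]] mu _ that]) (use gens in auto)
    then show ?thesis unfolding hcomp_def using that by simp
  qed
  then show ?thesis using \<psi>(1) by blast
qed

end


context setting begin

lemma image_gen:
  assumes mu: "\<mu> \<in> hom ar (W ar E X) H"
  shows "\<mu> ` carrier (W ar E X) = generated ar H ((\<lambda>x. \<mu> (gen X x)) ` X)"
proof
  have "\<mu> (cls ar E X t) \<in> generated ar H ((\<lambda>x. \<mu> (gen X x)) ` X)" if "wf_trm ar X t" for t
    using that
  proof (induction t)
    case (V x) then show ?case by (auto intro: generated.base)
  next
    case (F f ts)
    then have "\<mu> (cls ar E X (F f ts)) = op H f (map (\<lambda>t. \<mu> (cls ar E X t)) ts)"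
      using hom_cls[OF wfE mu] by auto
    moreover have "op H f (map (\<lambda>t. \<mu> (cls ar E X t)) ts) \<in> generated ar H ((\<lambda>x. \<mu> (gen X x)) ` X)"
      by (rule generated.opr) (use F in auto)
    ultimately show ?case by simp
  qed
  then show "\<mu> ` carrier (W ar E X) \<subseteq> generated ar H ((\<lambda>x. \<mu> (gen X x)) ` X)"
    using carrier_W[OF wfE] by auto
next
  show "generated ar H ((\<lambda>x. \<mu> (gen X x)) ` X) \<subseteq> \<mu> ` carrier (W ar E X)"
  proof
    fix a assume "a \<in> generated ar H ((\<lambda>x. \<mu> (gen X x)) ` X)"
    then show "a \<in> \<mu> ` carrier (W ar E X)"
    proof (induction rule: generated.induct)
      case (base a) then show ?case using gen_in by auto
    next
      case (opr cs f)
      define ds where "ds = map (\<lambda>c. SOME d. d \<in> carrier (W ar E X) \<and> \<mu> d = c) cs"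
      have d: "\<forall>c\<in>set cs. (SOME d. d \<in> carrier (W ar E X) \<and> \<mu> d = c) \<in> carrier (W ar E X)
          \<and> \<mu> (SOME d. d \<in> carrier (W ar E X) \<and> \<mu> d = c) = c"
      proof
        fix c assume "c \<in> set cs"
        then have "\<exists>d. d \<in> carrier (W ar E X) \<and> \<mu> d = c" using opr by auto
        then show "(SOME d. d \<in> carrier (W ar E X) \<and> \<mu> d = c) \<in> carrier (W ar E X)
          \<and> \<mu> (SOME d. d \<in> carrier (W ar E X) \<and> \<mu> d = c) = c" by (rule someI_ex)
      qed
      have mds: "map \<mu> ds = cs" unfolding ds_def using d by (induction cs) auto
      have sds: "set ds \<subseteq> carrier (W ar E X)" "length ds = ar f" unfolding ds_def using d opr by auto
      have "\<mu> (op (W ar E X) f ds) = op H f (map \<mu> ds)" using mu sds unfolding hom_def by auto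
      moreover have "op (W ar E X) f ds \<in> carrier (W ar E X)" using W_closed[OF wfE sds(2,1)] .
      ultimately show ?case using mds by (metis image_eqI)
    qed
  qed
qed

lemma fg_image:
  assumes "finite X" "\<mu> \<in> hom ar (W ar E X) H"
  shows "fg_subalg ar H (\<mu> ` carrier (W ar E X))"
  unfolding fg_subalg_def image_gen[OF assms(2)]
  by (rule exI[of _ "(\<lambda>x. \<mu> (gen X x)) ` X"]) (use assms hom_in[OF assms(2) gen_in] in auto)

lemma lp:
  assumes wh: "weakly_homogeneous ar H"
  shows "logically_perfect ar E H"
  unfolding logically_perfect_def
proof (intro allI impI ballI)
  fix X \<mu> \<nu>
  assume finX: "finite X" and mu: "\<mu> \<in> hom ar (W ar E X) H" and nu: "\<nu> \<in> hom ar (W ar E X) H"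
    and LK: "LKer ar E H X \<mu> = LKer ar E H X \<nu>"
  obtain \<psi>1 where p1: "\<psi>1 \<in> hom ar H H" "\<forall>c\<in>carrier (W ar E X). \<psi>1 (\<nu> c) = \<mu> c"
    using one_dir[OF finX mu nu] LK by auto
  obtain \<psi>2 where p2: "\<psi>2 \<in> hom ar H H" "\<forall>c\<in>carrier (W ar E X). \<psi>2 (\<mu> c) = \<nu> c"
    using one_dir[OF finX nu mu] LK by auto
  define C where "C = carrier (W ar E X)"
  define A where "A = \<mu> ` C"
  define B where "B = \<nu> ` C"
  define \<phi> where "\<phi> b = (if b \<in> B then \<psi>1 b else undefined)" for b
  have BH: "B \<subseteq> carrier H" unfolding B_def C_def using hom_in[OF nu] by auto
  have fgA: "fg_subalg ar H A" unfolding A_def C_def by (rule fg_image[OF finX mu])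
  have fgB: "fg_subalg ar H B" unfolding B_def C_def by (rule fg_image[OF finX nu])
  have Bgen: "B = generated ar H ((\<lambda>x. \<nu> (gen X x)) ` X)" unfolding B_def C_def by (rule image_gen[OF nu])
  have phinu: "\<phi> (\<nu> c) = \<mu> c" if "c \<in> C" for c using that p1 unfolding \<phi>_def B_def C_def by auto
  have inj: "inj_on \<phi> B"
  proof
    fix b b' assume "b \<in> B" "b' \<in> B" "\<phi> b = \<phi> b'"
    then obtain c c' where "c \<in> C" "c' \<in> C" "b = \<nu> c" "b' = \<nu> c'" unfolding B_def by auto
    then show "b = b'" using \<open>\<phi> b = \<phi> b'\<close> phinu p2(2) unfolding C_def by metis
  qed
  have img: "\<phi> ` B = A" unfolding A_def using phinu by (force simp: B_def)
  have mapphi: "map \<phi> cs = map \<psi>1 cs" if "set cs \<subseteq> B" for cs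
    using that by (induction cs) (auto simp: \<phi>_def)
  have "\<phi> (op H f cs) = op H f (map \<phi> cs)" if "length cs = ar f" "set cs \<subseteq> B" for f cs
  proof -
    have "op H f cs \<in> B" unfolding Bgen by (rule generated.opr) (use that Bgen in auto)
    then have "\<phi> (op H f cs) = \<psi>1 (op H f cs)" unfolding \<phi>_def by simp
    also have "\<dots> = op H f (map \<psi>1 cs)" using p1(1) that BH unfolding hom_def by auto
    finally show ?thesis using mapphi[OF that(2)] by (metis (no_types))
  qed
  then have "\<phi> \<in> hom ar (subalg H B) (subalg H A)"
    unfolding hom_def subalg_def using img by (auto simp: \<phi>_def)
  then have iso: "\<phi> \<in> iso ar (subalg H B) (subalg H A)"
    unfolding iso_def subalg_def using inj img by (simp add: bij_betw_def)
  have e1: "\<exists>\<psi> \<in> hom ar H H. \<forall>a \<in> B. \<psi> a = \<phi> a" using p1(1) by (intro bexI[of _ \<psi>1]) (auto simp: \<phi>_def)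
  have "\<psi>2 a = inv_into B \<phi> a" if "a \<in> A" for a
  proof -
    obtain c where c: "c \<in> C" "a = \<mu> c" using \<open>a \<in> A\<close> unfolding A_def by auto
    have "\<nu> c \<in> B" using c unfolding B_def by auto
    then have "inv_into B \<phi> (\<phi> (\<nu> c)) = \<nu> c" using inv_into_f_f[OF inj] by blast
    then show ?thesis using c phinu p2(2) unfolding C_def by auto
  qed
  then have e2: "\<exists>\<psi> \<in> hom ar H H. \<forall>a \<in> A. \<psi> a = inv_into B \<phi> a" using p2(1) by blast
  obtain \<psi> where \<psi>: "automorphism ar H \<psi>" "\<forall>b\<in>B. \<psi> b = \<phi> b"
    using wh fgA fgB iso e1 e2 unfolding weakly_homogeneous_def by blast
  show "\<exists>\<phi>. automorphism ar H \<phi> \<and> (\<forall>w\<in>carrier (W ar E X). \<mu> w = \<phi> (\<nu> w))"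
    using \<psi> phinu unfolding B_def C_def by (intro exI[of _ \<psi>]) auto
qed

end

theorem mainTheorem2:
  fixes ar :: "'f \<Rightarrow> nat" and E :: "('f trm \<times> 'f trm) set"
    and H :: "('f, 'a) alg" and X0 :: "nat set"
  assumes "\<forall>(l, r) \<in> E. wf_trm ar UNIV l \<and> wf_trm ar UNIV r"
    and "finite X0"
    and "iso ar (W ar E X0) H \<noteq> {}"
    and "weakly_homogeneous ar H"
  shows "logically_perfect ar E H"
proof -
  obtain \<theta> where "\<theta> \<in> iso ar (W ar E X0) H" using assms(3) by blast
  then interpret setting ar E H X0 \<theta> using assms by unfold_locales auto
  show ?thesis using lp[OF assms(4)] .
qed


end
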